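(* Let $m>0$ and $\bar b>0$. For real $\lambda$ and a real symmetric matrix $\widehat{\bar P}=\begin{pmatrix}\bar p_{11}&\bar p_{12}\\ \bar p_{12}&\bar p_{22}\end{pmatrix}$ define the symmetric $3\times3$ matrix $\widehat{\bar T}(\lambda,\widehat{\bar P})$ with entries $$\bar t_{11}=(\lambda-2\bar b\sqrt m)\bar p_{11}+2\sqrt m\,\bar p_{12},\quad \bar t_{12}=-\bar b\sqrt m\,\bar p_{12}+\sqrt m\,\bar p_{22}+\lambda\bar p_{12},\quad \bar t_{13}=-\bar p_{11}/\sqrt m+\sqrt m/2,$$ $$\bar t_{22}=\lambda\bar p_{22}-\tfrac m2\lambda,\quad \bar t_{23}=-\bar p_{12}/\sqrt m+\lambda/2,\quad \bar t_{33}=0.$$ Let $\bar r^\star$ be the unique real number with $\bar r^\star\bar b^2-2(\bar r^{\star2}+1)\bar b+\bar r^{\star3}+3\bar r^\star=0$, and $\lambda^\star=\sqrt m\,\bar r^\star$. Then $\lambda^\star$ equals the maximum of $\lambda$ over all pairs $(\lambda,\widehat{\bar P})$ satisfying $\widehat{\bar T}(\lambda,\widehat{\bar P})\preceq0$ and $\widehat{\bar P}\succeq0$; it is attained at $\widehat{\bar P}=\frac m2\begin{pmatrix}1&\bar r^\star\\ \bar r^\star&\bar r^{\star2}\end{pmatrix}$.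
   Context: The matrix $\widehat{\bar T}$ is the Lyapunov linear matrix inequality matrix (with no smoothness multiplier) for the first-order system $\dot v=-\bar b\sqrt m v-\nabla f(x)/\sqrt m$, $\dot x=\sqrt m v$, equivalent to $\ddot x+\bar b\sqrt m\dot x+\nabla f(x)=0$. $\preceq0$/$\succeq0$ denote negative/positive semidefiniteness. *)

theory Defs
  imports "HOL-Analysis.Analysis"
begin

text \<open>Positive / negative semidefiniteness of a (real, square) matrix via its quadratic form.
 All matrices used below are symmetric by construction.\<close>
definition psd :: "real^'n^'n \<Rightarrow> bool" where
  "psd A \<longleftrightarrow> (\<forall>x. 0 \<le> x \<bullet> (A *v x))"

definition nsd :: "real^'n^'n \<Rightarrow> bool" where
  "nsd A \<longleftrightarrow> (\<forall>x. x \<bullet> (A *v x) \<le> 0)"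

definition Pmat :: "real \<Rightarrow> real \<Rightarrow> real \<Rightarrow> real^2^2" where
  "Pmat p11 p12 p22 = vector [vector [p11, p12], vector [p12, p22]]"

definition Tmat :: "real \<Rightarrow> real \<Rightarrow> real \<Rightarrow> real \<Rightarrow> real \<Rightarrow> real \<Rightarrow> real^3^3" where
  "Tmat m b lam p11 p12 p22 =
    (let t11 = (lam - 2 * b * sqrt m) * p11 + 2 * sqrt m * p12;
         t12 = - b * sqrt m * p12 + sqrt m * p22 + lam * p12;
         t13 = - p11 / sqrt m + sqrt m / 2;
         t22 = lam * p22 - (m / 2) * lam;
         t23 = - p12 / sqrt m + lam / 2;
         t33 = 0
     in vector [vector [t11, t12, t13], vector [t12, t22, t23], vector [t13, t23, t33]])"

end

theory Submission imports Defs begin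
lemma qfT: "x \<bullet> (Tmat m b lam p11 p12 p22 *v x) =
  (let t11 = (lam - 2 * b * sqrt m) * p11 + 2 * sqrt m * p12;
         t12 = - b * sqrt m * p12 + sqrt m * p22 + lam * p12;
         t13 = - p11 / sqrt m + sqrt m / 2;
         t22 = lam * p22 - (m / 2) * lam;
         t23 = - p12 / sqrt m + lam / 2
   in t11 * (x$1)^2 + 2*t12*x$1*x$2 + 2*t13*x$1*x$3 + t22*(x$2)^2 + 2*t23*x$2*x$3)"
  unfolding Tmat_def Let_def
  by (simp add: inner_vec_def matrix_vector_mult_def sum_3 power2_eq_square algebra_simps)
lemma qfP: "x \<bullet> (Pmat p11 p12 p22 *v x) = p11*(x$1)^2 + 2*p12*x$1*x$2 + p22*(x$2)^2"
  unfolding Pmat_def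
  by (simp add: inner_vec_def matrix_vector_mult_def sum_2 power2_eq_square algebra_simps)

lemma lin0: fixes a c :: real assumes "\<And>z. a + 2*c*z \<le> 0" shows "c = 0"
proof (rule ccontr)
  assume "c \<noteq> 0"
  have "a + 2*c*((1-a)/(2*c)) \<le> 0" by (rule assms)
  moreover have "a + 2*c*((1-a)/(2*c)) = 1" using \<open>c \<noteq> 0\<close> by (simp add: field_simps)
  ultimately show False by simp
qed

lemma quad_nsd: fixes a c d :: real
  assumes "\<And>x y. a*x^2 + 2*c*x*y + d*y^2 \<le> 0"
  shows "a \<le> 0 \<and> d \<le> 0 \<and> c^2 \<le> a*d"
proof -
  have a: "a \<le> 0" using assms[of 1 0] by simp
  have d: "d \<le> 0" using assms[of 0 1] by simp
  have "c^2 \<le> a*d"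
  proof (cases "a = 0")
    case True
    have "\<And>z. d + 2*c*z \<le> 0" using assms[of _ 1] True by (simp add: algebra_simps)
    then have "c = 0" by (rule lin0)
    then show ?thesis using True by simp
  next
    case False
    have h: "a*c^2 + 2*c*c*(-a) + d*(-a)^2 \<le> 0" using assms[of c "-a"] by simp
    have "a*c^2 + 2*c*c*(-a) + d*(-a)^2 = a * (a*d - c^2)" by (simp add: power2_eq_square algebra_simps)
    then have "a * (a*d - c^2) \<le> 0" using h by simp
    then have "a*d - c^2 \<ge> 0" using a False by (simp add: mult_le_0_iff)
    then show ?thesis by simp
  qed
  with a d show ?thesis by simp
qed

lemma quad_nsd_rev: fixes a c d x y :: real
  assumes "a \<le> 0" "d \<le> 0" "c^2 \<le> a*d"
  shows "a*x^2 + 2*c*x*y + d*y^2 \<le> 0"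
proof (cases "a = 0")
  case True
  then have "c = 0" using assms by simp
  then show ?thesis using True assms by (simp add: mult_nonpos_nonneg)
next
  case False
  have "a*(a*x^2 + 2*c*x*y + d*y^2) = (a*x + c*y)^2 + (a*d - c^2)*y^2"
    by (simp add: power2_eq_square algebra_simps)
  also have "\<dots> \<ge> 0" using assms by simp
  finally have "a*(a*x^2 + 2*c*x*y + d*y^2) \<ge> 0" .
  then show ?thesis using assms False by (simp add: zero_le_mult_iff)
qed

lemma root_bounds: fixes b r :: real assumes "b > 0" "r * b^2 - 2 * (r^2 + 1) * b + r^3 + 3 * r = 0"
  shows "0 < r \<and> r \<le> 1"
proof
  show "0 < r"
  proof (rule ccontr)
    assume "\<not> 0 < r"
    then have "r*(r-b)^2 \<le> 0" by (simp add: mult_nonpos_nonneg)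
    moreover have "r * b^2 - 2 * (r^2 + 1) * b + r^3 + 3 * r = r*(r-b)^2 + 3*r - 2*b"
      by (simp add: power2_eq_square power3_eq_cube algebra_simps)
    ultimately show False using assms \<open>\<not> 0 < r\<close> by linarith
  qed
  have "r * (r * b^2 - 2 * (r^2 + 1) * b + r^3 + 3 * r) = (r*b - (r^2+1))^2 - 1 + r^2"
    by (simp add: power2_eq_square power3_eq_cube algebra_simps)
  then have "(r*b - (r^2+1))^2 - 1 + r^2 = 0" using assms by simp
  moreover have "(r*b - (r^2+1))^2 \<ge> 0" by simp
  ultimately have "r^2 \<le> 1" by linarith
  then show "r \<le> 1" using \<open>0 < r\<close> by (simp add: power_le_one_iff abs_le_iff)
qed

lemma mono_g: fixes b r p :: real
  assumes "0 \<le> r" "r \<le> 1" "0 \<le> p" "p \<le> 1" "r < p"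
  shows "r * b^2 - 2 * (r^2 + 1) * b + r^3 + 3 * r < p * b^2 - 2 * (p^2 + 1) * b + p^3 + 3 * p"
proof -
  have e: "(p * b^2 - 2 * (p^2 + 1) * b + p^3 + 3 * p) - (r * b^2 - 2 * (r^2 + 1) * b + r^3 + 3 * r)
     = (p - r) * ((b - p - r)^2 + 3 - p*r)"
    by (simp add: power2_eq_square power3_eq_cube algebra_simps)
  have "p*r \<le> 1" using assms by (simp add: mult_le_one)
  then have "(b - p - r)^2 + 3 - p*r > 0" by (smt (verit) zero_le_power2)
  then have "(p - r) * ((b - p - r)^2 + 3 - p*r) > 0" using assms by simp
  then show ?thesis using e by linarith
qed

theorem theorem6:
  fixes m b :: real
  assumes "m > 0" and "b > 0"
  shows "(\<exists>!r::real. r * b^2 - 2 * (r^2 + 1) * b + r^3 + 3 * r = 0)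
       \<and> (\<forall>r::real. r * b^2 - 2 * (r^2 + 1) * b + r^3 + 3 * r = 0 \<longrightarrow>
           nsd (Tmat m b (sqrt m * r) (m/2) (m/2 * r) (m/2 * r^2))
         \<and> psd (Pmat (m/2) (m/2 * r) (m/2 * r^2))
         \<and> (\<forall>lam p11 p12 p22. nsd (Tmat m b lam p11 p12 p22) \<and> psd (Pmat p11 p12 p22)
                \<longrightarrow> lam \<le> sqrt m * r))"
proof -
  define G where "G = (\<lambda>r::real. r * b^2 - 2 * (r^2 + 1) * b + r^3 + 3 * r)"
  define s where "s = sqrt m"
  have s0: "s > 0" using assms s_def by simp
  have ms: "m = s^2" using assms s_def by simp
  have ex: "\<exists>r. G r = 0"
  proof -
    have "G 0 \<le> 0" using assms by (simp add: G_def)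
    moreover have "0 \<le> G 1"
    proof -
      have "G 1 = (b-2)^2" by (simp add: G_def power2_eq_square algebra_simps)
      then show ?thesis by simp
    qed
    moreover have "\<forall>x. 0 \<le> x \<and> x \<le> 1 \<longrightarrow> isCont G x" unfolding G_def by (auto intro!: continuous_intros)
    ultimately obtain x where "G x = 0" using IVT[of G 0 0 1] by auto
    then show ?thesis by blast
  qed
  have uniq: "r1 = r2" if "G r1 = 0" "G r2 = 0" for r1 r2
  proof -
    have b1: "0 < r1 \<and> r1 \<le> 1" using root_bounds[OF assms(2)] that(1) by (simp add: G_def)
    have b2: "0 < r2 \<and> r2 \<le> 1" using root_bounds[OF assms(2)] that(2) by (simp add: G_def)
    show ?thesis
    proof (rule ccontr)
      assume "r1 \<noteq> r2"
      then consider "r1 < r2" | "r2 < r1" by linarith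
      then show False
      proof cases
        case 1 then show False using mono_g[of r1 r2 b] b1 b2 that by (simp add: G_def)
      next
        case 2 then show False using mono_g[of r2 r1 b] b1 b2 that by (simp add: G_def)
      qed
    qed
  qed
  have part1: "\<exists>!r. G r = 0" using ex uniq by blast
  have part2: "nsd (Tmat m b (sqrt m * r) (m/2) (m/2 * r) (m/2 * r^2))
         \<and> psd (Pmat (m/2) (m/2 * r) (m/2 * r^2))
         \<and> (\<forall>lam p11 p12 p22. nsd (Tmat m b lam p11 p12 p22) \<and> psd (Pmat p11 p12 p22)
                \<longrightarrow> lam \<le> sqrt m * r)" if Gr: "G r = 0" for r
  proof -
    have rb: "0 < r \<and> r \<le> 1" using root_bounds[OF assms(2)] Gr by (simp add: G_def)
    define k where "k = s^3/2"
    have k0: "k > 0" unfolding k_def using s0 by simp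
    have N: "nsd (Tmat m b (sqrt m * r) (m/2) (m/2 * r) (m/2 * r^2))"
      unfolding nsd_def
    proof
      fix x :: "real^3"
      have e: "x \<bullet> (Tmat m b (sqrt m * r) (m/2) (m/2 * r) (m/2 * r^2) *v x)
        = (k*(3*r-2*b)) * (x$1)^2 + 2*(k*(2*r^2-b*r))*x$1*x$2 + (k*(r^3-r))*(x$2)^2"
        unfolding qfT Let_def s_def[symmetric] k_def using s0 
        by (simp add: ms power2_eq_square power3_eq_cube field_simps)
      have a: "k*(3*r-2*b) \<le> 0"
      proof -
        have "3*r - 2*b = - r*(r-b)^2" using Gr
          by (simp add: G_def power2_eq_square power3_eq_cube algebra_simps)
        also have "\<dots> \<le> 0" using rb by simp
        finally show ?thesis using k0 by (simp add: mult_nonneg_nonpos)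
      qed
      have d: "k*(r^3-r) \<le> 0"
      proof -
        have "r^3 \<le> r" using rb by (simp add: power3_eq_cube mult_le_one)
        then show ?thesis using k0 by (simp add: mult_nonneg_nonpos)
      qed
      have det: "(k*(3*r-2*b))*(k*(r^3-r)) - (k*(2*r^2-b*r))^2 = k^2 * (- r * G r)"
        by (simp add: G_def power2_eq_square power3_eq_cube algebra_simps)
      have c: "(k*(2*r^2-b*r))^2 \<le> (k*(3*r-2*b))*(k*(r^3-r))" using det Gr by simp
      show "x \<bullet> (Tmat m b (sqrt m * r) (m/2) (m/2 * r) (m/2 * r^2) *v x) \<le> 0"
        unfolding e by (rule quad_nsd_rev[OF a d c])
    qed
    have P: "psd (Pmat (m/2) (m/2 * r) (m/2 * r^2))"
      unfolding psd_def
    proof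
      fix x :: "real^2"
      have "x \<bullet> (Pmat (m/2) (m/2 * r) (m/2 * r^2) *v x) = m/2 * (x$1 + r*x$2)^2"
        unfolding qfP by (simp add: power2_eq_square algebra_simps)
      moreover have "m/2 * (x$1 + r*x$2)^2 \<ge> 0" using assms by simp
      ultimately show "0 \<le> x \<bullet> (Pmat (m/2) (m/2 * r) (m/2 * r^2) *v x)" by linarith
    qed
    have M: "lam \<le> sqrt m * r" if hT: "nsd (Tmat m b lam p11 p12 p22)" and hP: "psd (Pmat p11 p12 p22)"
      for lam p11 p12 p22
    proof -
      define \<rho> where "\<rho> = lam / s"
      define q where "q = 2 * p22 / s^2"
      have lam: "lam = s*\<rho>" using s0 \<rho>_def by simp
      have p22: "p22 = s^2*q/2" using s0 q_def by simp
      define T11 where "T11 = (lam - 2 * b * s) * p11 + 2 * s * p12"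
      define T12 where "T12 = - b * s * p12 + s * p22 + lam * p12"
      define T13 where "T13 = - p11 / s + s / 2"
      define T22 where "T22 = lam * p22 - (m / 2) * lam"
      define T23 where "T23 = - p12 / s + lam / 2"
      have hQ: "T11*x1^2 + 2*T12*x1*x2 + 2*T13*x1*x3 + T22*x2^2 + 2*T23*x2*x3 \<le> 0" for x1 x2 x3
      proof -
        have "vector [x1,x2,x3] \<bullet> (Tmat m b lam p11 p12 p22 *v vector [x1,x2,x3]) \<le> 0"
          using hT unfolding nsd_def by blast
        then show ?thesis unfolding qfT Let_def s_def[symmetric] T11_def T12_def T13_def T22_def T23_def
          by simp
      qed
      have "T13 = 0" by (rule lin0[of T11]) (use hQ[of 1 0] in simp)
      have "T23 = 0" by (rule lin0[of T22]) (use hQ[of 0 1] in simp)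
      have Q2: "T11 \<le> 0 \<and> T22 \<le> 0 \<and> T12^2 \<le> T11*T22"
        by (rule quad_nsd) (use hQ[of _ _ 0] in simp)
      have p11: "p11 = s^2/2" using \<open>T13 = 0\<close> s0 unfolding T13_def by (simp add: field_simps power2_eq_square)
      have p12: "p12 = s^2*\<rho>/2" using \<open>T23 = 0\<close> s0 lam unfolding T23_def by (simp add: field_simps power2_eq_square)
      have hP2: "(-p11)*x1^2 + 2*(-p12)*x1*x2 + (-p22)*x2^2 \<le> 0" for x1 x2
      proof -
        have "0 \<le> vector [x1,x2] \<bullet> (Pmat p11 p12 p22 *v vector [x1,x2])"
          using hP unfolding psd_def by blast
        then show ?thesis unfolding qfP by simp
      qed
      have "(-p12)^2 \<le> (-p11)*(-p22)" using quad_nsd[OF hP2] by blast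
      then have "(s^2*\<rho>/2)^2 \<le> (s^2/2) * (s^2*q/2)" using p11 p12 p22 by simp
      then have "s^4 * \<rho>^2 \<le> s^4 * q" by (simp add: power2_eq_square power4_eq_xxxx field_simps)
      then have rq: "\<rho>^2 \<le> q" using s0 by simp
      have E11: "T11 = k*(3*\<rho>-2*b)" unfolding T11_def k_def lam p11 p12
        by (simp add: power2_eq_square power3_eq_cube field_simps)
      have E12: "T12 = k*(\<rho>^2-b*\<rho>+q)" unfolding T12_def k_def lam p22 p12
        by (simp add: power2_eq_square power3_eq_cube field_simps)
      have E22: "T22 = k*(\<rho>*(q-1))" unfolding T22_def k_def lam p22 ms
        by (simp add: power2_eq_square power3_eq_cube field_simps)
      have "k^2 * (\<rho>^2-b*\<rho>+q)^2 \<le> k^2 * ((3*\<rho>-2*b)*(\<rho>*(q-1)))"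
        using Q2 E11 E12 E22 by (simp add: power_mult_distrib power2_eq_square algebra_simps)
      then have F: "(\<rho>^2-b*\<rho>+q)^2 \<le> (3*\<rho>-2*b)*(\<rho>*(q-1))" using k0 by simp
      show ?thesis
      proof (cases "\<rho> \<le> 0")
        case True
        then have "lam \<le> 0" using lam s0 by (simp add: mult_nonneg_nonpos)
        moreover have "0 < sqrt m * r" using assms rb by simp
        ultimately show ?thesis by linarith
      next
        case False
        have "k*(\<rho>*(q-1)) \<le> 0" using Q2 E22 by simp
        then have "\<rho>*(q-1) \<le> 0" using k0 by (simp add: mult_le_0_iff)
        then have q1: "q \<le> 1" using False by (simp add: mult_le_0_iff)
        then have "\<rho>^2 \<le> 1" using rq by simp
        then have r1: "\<rho> \<le> 1" using False by (simp add: power_le_one_iff abs_le_iff)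
        have id: "- \<rho> * G \<rho> = ((3*\<rho>-2*b)*(\<rho>*(q-1)) - (\<rho>^2-b*\<rho>+q)^2) + (q - \<rho>^2)*q"
          by (simp add: G_def power2_eq_square power3_eq_cube algebra_simps)
        have "(q - \<rho>^2)*q \<ge> 0" using rq by (smt (verit) mult_nonneg_nonneg zero_le_power2)
        then have "- \<rho> * G \<rho> \<ge> 0" using id F by linarith
        then have "G \<rho> \<le> 0" using False by (simp add: mult_le_0_iff)
        have "\<rho> \<le> r"
        proof (rule ccontr)
          assume "\<not> \<rho> \<le> r"
          then have "G r < G \<rho>" using mono_g[of r \<rho> b] rb r1 False unfolding G_def by simp
          then show False using Gr \<open>G \<rho> \<le> 0\<close> by simp
        qed
        then show ?thesis using lam s0 s_def by simp
      qed
    qed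
    show ?thesis using N P M by blast
  qed
  show ?thesis using part1 part2 unfolding G_def by blast
qed

end
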